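(* Let $\tau:\mathbb R^2\to[0,1]$ be almost everywhere continuous, equal to $1$ on $B(0,a)$ and equal to $0$ outside $B(0,b)$ for some $0<a<b$. There exist $c_\tau\in\mathbb R$ depending only on $\tau$, and real numbers $(C_L)_{L\ge1}$ not depending on $\tau$ with $C_L\to0$ as $L\to\infty$, such that for all $L\ge1$ $$c_{\epsilon,L}-\frac1{2\pi}\log\frac1\epsilon-c_\tau\xrightarrow{\epsilon\downarrow0}C_L .$$
   Context: For $\epsilon,L>0$, $c_{\epsilon,L}=\frac1{4L^2}\sum_{k\in\mathbb Z^2}\frac{\tau(\frac\epsilon Lk)^2}{1+\frac{\pi^2}{L^2}|k|^2}$. *)

theory Defs
  imports "HOL-Analysis.Analysis"
begin

definition c_epsL :: "(real \<times> real \<Rightarrow> real) \<Rightarrow> real \<Rightarrow> real \<Rightarrow> real" where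
  "c_epsL \<tau> \<epsilon> L =
     1 / (4 * L\<^sup>2) *
     (\<Sum>\<^sub>\<infinity>k\<in>(UNIV :: (int \<times> int) set).
        (\<tau> ((\<epsilon> / L) * real_of_int (fst k), (\<epsilon> / L) * real_of_int (snd k)))\<^sup>2
        / (1 + pi\<^sup>2 / L\<^sup>2 * (real_of_int (fst k) ^ 2 + real_of_int (snd k) ^ 2)))"

end

theory Submission
  imports Defs
begin


lemma fst_bm[measurable]: "(fst :: real\<times>real \<Rightarrow> real) \<in> borel_measurable borel"
  by (simp add: borel_prod[symmetric])
lemma snd_bm[measurable]: "(snd :: real\<times>real \<Rightarrow> real) \<in> borel_measurable borel"
  by (simp add: borel_prod[symmetric])

definition gb :: "real \<Rightarrow> real" where "gb t = 1 / ((1 + \<bar>t\<bar>) * sqrt (1 + \<bar>t\<bar>))"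

lemma gb_pos: "gb t > 0" unfolding gb_def by (simp add: add_pos_nonneg)

lemma gb_meas[measurable]: "gb \<in> borel_measurable borel"
  unfolding gb_def by measurable

lemma gb_half: "(\<integral>\<^sup>+x. ennreal (gb x) * indicator {0 ..} x \<partial>lborel) = 2"
proof -
  have "(\<integral>\<^sup>+x. ennreal (gb x) * indicator {0 ..} x \<partial>lborel) = 0 - (-2 / sqrt (1 + 0))"
  proof (rule nn_integral_FTC_atLeast)
    show "gb \<in> borel_measurable borel" by measurable
    show "DERIV (\<lambda>t. -2 / sqrt (1 + t)) x :> gb x" if "0 \<le> x" for x
    proof -
      have "DERIV (\<lambda>t. -2 / sqrt (1 + t)) x :> (-(-2 * (inverse (sqrt (1+x)) / 2)) / (sqrt (1+x))^2)"
        using that by (auto intro!: derivative_eq_intros simp: )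
      moreover have "(-(-2 * (inverse (sqrt (1+x)) / 2)) / (sqrt (1+x))^2) = gb x"
        using that by (simp add: gb_def field_simps)
      ultimately show ?thesis by simp
    qed
    show "0 \<le> gb x" for x using gb_pos[of x] by simp
    show "((\<lambda>t. -2 / sqrt (1 + t)) \<longlongrightarrow> 0) at_top" by real_asymp
  qed
  then show ?thesis by simp
qed



lemma gb_full: "(\<integral>\<^sup>+x. ennreal (gb x) \<partial>lborel) \<le> 4"
proof -
  have "(\<integral>\<^sup>+x. ennreal (gb x) \<partial>lborel) \<le>
     (\<integral>\<^sup>+x. ennreal (gb x) * indicator {0 ..} x + ennreal (gb (-x)) * indicator {0 ..} (-x) \<partial>lborel)"
    by (intro nn_integral_mono) (auto simp: gb_def indicator_def)
  also have "\<dots> = (\<integral>\<^sup>+x. ennreal (gb x) * indicator {0 ..} x \<partial>lborel) + (\<integral>\<^sup>+x. ennreal (gb (-x)) * indicator {0 ..} (-x) \<partial>lborel)"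
    by (rule nn_integral_add) measurable
  also have "(\<integral>\<^sup>+x. ennreal (gb (-x)) * indicator {0 ..} (-x) \<partial>lborel) = (\<integral>\<^sup>+x. ennreal (gb x) * indicator {0 ..} x \<partial>lborel)"
    using nn_integral_real_affine[of "\<lambda>x. ennreal (gb x) * indicator {0 ..} x" "-1" 0] by simp
  finally show ?thesis using gb_half by simp
qed

definition Gb :: "real \<times> real \<Rightarrow> real" where "Gb w = 30 * (gb (fst w) * gb (snd w))"

lemma Gb_meas[measurable]: "Gb \<in> borel_measurable borel" unfolding Gb_def by measurable

lemma Gb_pos: "Gb w > 0" unfolding Gb_def using gb_pos by simp

lemma Gb_int: "integrable lborel Gb"
proof -
  have "(\<integral>\<^sup>+w. ennreal (gb (fst w) * gb (snd w)) \<partial>(lborel::(real\<times>real) measure))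
      = (\<integral>\<^sup>+x. \<integral>\<^sup>+y. ennreal (gb x) * ennreal (gb y) \<partial>lborel \<partial>lborel)"
  proof -
    have "(\<integral>\<^sup>+w. ennreal (gb (fst w) * gb (snd w)) \<partial>(lborel::(real\<times>real) measure))
      = (\<integral>\<^sup>+w. ennreal (gb (fst w) * gb (snd w)) \<partial>(lborel \<Otimes>\<^sub>M lborel))"
      by (simp only: lborel_prod)
    also have "\<dots> = (\<integral>\<^sup>+x. \<integral>\<^sup>+y. ennreal (gb (fst (x,y)) * gb (snd (x,y))) \<partial>lborel \<partial>lborel)"
      by (rule lborel.nn_integral_fst[symmetric]) measurable
    finally show ?thesis by (simp add: ennreal_mult gb_pos less_imp_le)
  qed
  also have "\<dots> = (\<integral>\<^sup>+x. ennreal (gb x) * (\<integral>\<^sup>+y. ennreal (gb y) \<partial>lborel) \<partial>lborel)"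
    by (subst nn_integral_cmult) auto
  also have "\<dots> = (\<integral>\<^sup>+x. ennreal (gb x) \<partial>lborel) * (\<integral>\<^sup>+y. ennreal (gb y) \<partial>lborel)"
    by (subst nn_integral_multc) auto
  also have "\<dots> \<le> 4 * 4"
    using gb_full by (intro mult_mono) auto
  finally have fin: "(\<integral>\<^sup>+w. ennreal (gb (fst w) * gb (snd w)) \<partial>(lborel::(real\<times>real) measure)) < \<infinity>"
    by (simp add: le_less_trans)
  have "integrable lborel (\<lambda>w::real\<times>real. gb (fst w) * gb (snd w))"
    using fin by (subst integrable_iff_bounded) (auto simp: gb_pos less_imp_le abs_mult)
  then show ?thesis unfolding Gb_def by simp
qed



definition phi :: "real \<times> real \<Rightarrow> real" where
  "phi w = 1 / (1 + pi\<^sup>2 * ((fst w)\<^sup>2 + (snd w)\<^sup>2))"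

lemma phi_meas[measurable]: "phi \<in> borel_measurable borel" unfolding phi_def by measurable

lemma phi_pos: "0 < phi w" unfolding phi_def by (simp add: add_pos_nonneg)
lemma phi_le1: "phi w \<le> 1" unfolding phi_def by (simp add: add_pos_nonneg)

lemma gb_anti: "\<bar>t\<bar> \<le> m \<Longrightarrow> 1 / ((1+m) * sqrt (1+m)) \<le> gb t"
  unfolding gb_def
  by (intro divide_left_mono mult_mono mult_pos_pos) (auto simp: add_pos_nonneg)

lemma Gb_lower:
  assumes "m = max \<bar>fst w\<bar> \<bar>snd w\<bar>"
  shows "30 / (1+m)^3 \<le> Gb w"
proof -
  have m0: "0 \<le> m" using assms by auto
  have s: "sqrt (1+m) * sqrt (1+m) = 1 + m" using m0 by simp
  have "1 / ((1+m) * sqrt (1+m)) * (1 / ((1+m) * sqrt (1+m))) \<le> gb (fst w) * gb (snd w)"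
    using assms by (intro mult_mono gb_anti) (auto simp: gb_def add_pos_nonneg)
  moreover have "1 / ((1+m) * sqrt (1+m)) * (1 / ((1+m) * sqrt (1+m))) = 1 / (1+m)^3"
    using s m0 by (simp add: power3_eq_cube field_simps)
  ultimately show ?thesis unfolding Gb_def by simp
qed

lemma pi2_ge9: "9 \<le> pi\<^sup>2"
proof -
  have "3 \<le> pi" using pi_gt3 by simp
  then have "3*3 \<le> pi * pi" by (intro mult_mono) auto
  then show ?thesis by (simp add: power2_eq_square)
qed

lemma phi_diff_bound:
  assumes "\<bar>fst q - fst w\<bar> \<le> 1" "\<bar>snd q - snd w\<bar> \<le> 1"
  shows "\<bar>phi q - phi w\<bar> \<le> Gb w"
proof -
  define m where "m = max \<bar>fst w\<bar> \<bar>snd w\<bar>"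
  have G: "30 / (1+m)^3 \<le> Gb w" using Gb_lower m_def by simp
  have m0: "0 \<le> m" unfolding m_def by auto
  show ?thesis
  proof (cases "m < 2")
    case True
    have "(1+m)^3 \<le> 3^3" using True m0 by (intro power_mono) auto
    then have "1 \<le> 30 / (1+m)^3" using m0 by (simp add: field_simps)
    moreover have "\<bar>phi q - phi w\<bar> \<le> 1" using phi_pos[of q] phi_pos[of w] phi_le1[of q] phi_le1[of w] by linarith
    ultimately show ?thesis using G by linarith
  next
    case False
    define n where "n = (fst w)\<^sup>2 + (snd w)\<^sup>2"
    define n' where "n' = (fst q)\<^sup>2 + (snd q)\<^sup>2"
    have e1: "\<bar>(fst w)\<^sup>2 - (fst q)\<^sup>2\<bar> \<le> 2 * \<bar>fst w\<bar> + 1"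
    proof -
      have "\<bar>(fst w)\<^sup>2 - (fst q)\<^sup>2\<bar> = \<bar>fst w - fst q\<bar> * \<bar>fst w + fst q\<bar>"
        by (simp add: power2_eq_square abs_mult[symmetric] algebra_simps)
      also have "\<dots> \<le> 1 * (2 * \<bar>fst w\<bar> + 1)"
        using assms by (intro mult_mono) auto
      finally show ?thesis by simp
    qed
    have e2: "\<bar>(snd w)\<^sup>2 - (snd q)\<^sup>2\<bar> \<le> 2 * \<bar>snd w\<bar> + 1"
    proof -
      have "\<bar>(snd w)\<^sup>2 - (snd q)\<^sup>2\<bar> = \<bar>snd w - snd q\<bar> * \<bar>snd w + snd q\<bar>"
        by (simp add: power2_eq_square abs_mult[symmetric] algebra_simps)
      also have "\<dots> \<le> 1 * (2 * \<bar>snd w\<bar> + 1)"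
        using assms by (intro mult_mono) auto
      finally show ?thesis by simp
    qed
    have dn: "\<bar>n - n'\<bar> \<le> 5 * m"
      using e1 e2 False unfolding n_def n'_def m_def by (auto simp: max_def)
    have nm: "m\<^sup>2 \<le> n" unfolding n_def m_def
      by (auto simp: max_def power2_eq_square abs_mult_self_eq)
    have qm: "m - 1 \<le> max \<bar>fst q\<bar> \<bar>snd q\<bar>" using assms unfolding m_def by (auto simp: max_def)
    have nm': "(m/2)\<^sup>2 \<le> n'"
    proof -
      have "m/2 \<le> max \<bar>fst q\<bar> \<bar>snd q\<bar>" using qm False by linarith
      then have "(m/2)\<^sup>2 \<le> (max \<bar>fst q\<bar> \<bar>snd q\<bar>)\<^sup>2" using m0 by (intro power_mono) auto
      also have "\<dots> \<le> n'" unfolding n'_def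
        by (auto simp: max_def power2_eq_square abs_mult_self_eq)
      finally show ?thesis .
    qed
    define A where "A = 1 + pi\<^sup>2 * n'"
    define B where "B = 1 + pi\<^sup>2 * n"
    have A0: "A > 0" "B > 0" unfolding A_def B_def n_def n'_def by (auto simp: add_pos_nonneg)
    have pq: "phi q = 1 / A" "phi w = 1 / B" unfolding phi_def A_def B_def n_def n'_def by auto
    have "phi q - phi w = pi\<^sup>2 * (n - n') / (A * B)"
      using A0 unfolding pq by (simp add: field_simps A_def B_def)
    then have d: "\<bar>phi q - phi w\<bar> = pi\<^sup>2 * \<bar>n - n'\<bar> / (A * B)"
      using A0 by (simp add: abs_mult)
    have AB: "pi\<^sup>2 * (m/2)\<^sup>2 * (pi\<^sup>2 * m\<^sup>2) \<le> A * B"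
      unfolding A_def B_def using nm nm' order_trans[OF zero_le_power2 nm']
      by (intro mult_mono) (auto intro!: add_increasing mult_left_mono)
    have m2: "m \<ge> 2" using False by simp
    have "\<bar>phi q - phi w\<bar> \<le> pi\<^sup>2 * (5 * m) / (pi\<^sup>2 * (m/2)\<^sup>2 * (pi\<^sup>2 * m\<^sup>2))"
      unfolding d using AB dn m2
      by (intro frac_le mult_left_mono) (auto intro!: mult_pos_pos)
    also have "\<dots> = 20 / (pi\<^sup>2 * m^3)"
      using m2 by (simp add: field_simps power2_eq_square power3_eq_cube)
    also have "\<dots> \<le> 30 / (1+m)^3"
    proof -
      have "(1+m)^3 \<le> (2*m)^3" using m2 by (intro power_mono) auto
      then have h: "(1+m)^3 \<le> 8*m^3" by (simp add: power_mult_distrib)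
      have "0 \<le> m^3" using m2 by simp
      then have "20 * (1+m)^3 \<le> 30 * (9 * m^3)" using h by linarith
      also have "\<dots> \<le> 30 * (pi\<^sup>2 * m^3)" using pi2_ge9 m2 by (intro mult_left_mono mult_right_mono) auto
      finally show ?thesis using m2 by (simp add: field_simps)
    qed
    finally show ?thesis using G by linarith
  qed
qed



definition qL :: "real \<Rightarrow> real \<times> real \<Rightarrow> real \<times> real" where
  "qL L w = (real_of_int \<lfloor>L * fst w\<rfloor> / L, real_of_int \<lfloor>L * snd w\<rfloor> / L)"

lemma qL_meas[measurable]: "qL L \<in> borel_measurable borel"
  unfolding qL_def by measurable

lemma floor_div_close:
  fixes L a :: real
  assumes "L > 0"
  shows "real_of_int \<lfloor>L * a\<rfloor> / L \<le> a" "a - 1 / L < real_of_int \<lfloor>L * a\<rfloor> / L"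
proof -
  have "real_of_int \<lfloor>L * a\<rfloor> / L \<le> (L * a) / L"
    by (rule divide_right_mono) (linarith, use assms in simp)
  then show "real_of_int \<lfloor>L * a\<rfloor> / L \<le> a" using assms by simp
  have "(L * a - 1) / L < real_of_int \<lfloor>L * a\<rfloor> / L"
    by (rule divide_strict_right_mono) (linarith, rule assms)
  then show "a - 1 / L < real_of_int \<lfloor>L * a\<rfloor> / L" using assms by (simp add: diff_divide_distrib)
qed

lemma qL_close:
  assumes "L \<ge> 1"
  shows "\<bar>fst (qL L w) - fst w\<bar> \<le> 1" "\<bar>snd (qL L w) - snd w\<bar> \<le> 1"
proof -
  have L1: "1 / L \<le> 1" using assms by simp
  have "L > 0" using assms by simp
  note a = floor_div_close[OF this, of "fst w"] floor_div_close[OF this, of "snd w"]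
  show "\<bar>fst (qL L w) - fst w\<bar> \<le> 1" unfolding qL_def fst_conv using a(1,2) L1 by linarith
  show "\<bar>snd (qL L w) - snd w\<bar> \<le> 1" unfolding qL_def snd_conv using a(3,4) L1 by linarith
qed

lemma floor_div_tendsto: "((\<lambda>L. real_of_int \<lfloor>L * a\<rfloor> / L) \<longlongrightarrow> a) at_top"
proof (rule tendsto_sandwich[of "\<lambda>L. a - 1 / L" _ _ "\<lambda>L. a"])
  show "\<forall>\<^sub>F L in at_top. a - 1 / L \<le> real_of_int \<lfloor>L * a\<rfloor> / L"
    using eventually_gt_at_top[of 0] by eventually_elim (use floor_div_close(2) in \<open>auto intro: less_imp_le\<close>)
  show "\<forall>\<^sub>F L in at_top. real_of_int \<lfloor>L * a\<rfloor> / L \<le> a"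
    using eventually_gt_at_top[of 0] by eventually_elim (rule floor_div_close(1))
  show "((\<lambda>L. a - 1 / L) \<longlongrightarrow> a) at_top" by real_asymp
qed simp

lemma qL_tendsto: "((\<lambda>L. qL L w) \<longlongrightarrow> w) at_top"
proof -
  have "((\<lambda>L. (real_of_int \<lfloor>L * fst w\<rfloor> / L, real_of_int \<lfloor>L * snd w\<rfloor> / L)) \<longlongrightarrow> (fst w, snd w)) at_top"
    by (intro tendsto_Pair floor_div_tendsto)
  then show ?thesis unfolding qL_def by simp
qed

lemma phi_cont: "isCont phi w"
proof -
  have "1 + pi\<^sup>2 * ((fst w)\<^sup>2 + (snd w)\<^sup>2) > 0" by (simp add: add_pos_nonneg)
  then show ?thesis unfolding phi_def by (intro continuous_intros) auto
qed

definition CC :: "real \<Rightarrow> real" where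
  "CC L = (1/4) * (\<integral>w. phi (qL L w) - phi w \<partial>lborel)"

lemma CC_tendsto: "(CC \<longlongrightarrow> 0) at_top"
proof -
  have "((\<lambda>L. \<integral>w. phi (qL L w) - phi w \<partial>lborel) \<longlongrightarrow> (\<integral>w. 0 \<partial>(lborel::(real\<times>real) measure))) at_top"
  proof (rule integral_dominated_convergence_at_top[where w = Gb])
    show "(\<lambda>w. 0::real) \<in> borel_measurable lborel" by simp
    show "(\<lambda>w. phi (qL L w) - phi w) \<in> borel_measurable lborel" for L by measurable
    show "integrable lborel Gb" by (rule Gb_int)
    show "AE w in lborel. ((\<lambda>L. phi (qL L w) - phi w) \<longlongrightarrow> 0) at_top"
    proof (rule AE_I2)
      fix w :: "real \<times> real"
      have "((\<lambda>L. phi (qL L w)) \<longlongrightarrow> phi w) at_top"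
        using isCont_tendsto_compose[OF phi_cont qL_tendsto] .
      then show "((\<lambda>L. phi (qL L w) - phi w) \<longlongrightarrow> 0) at_top"
        using tendsto_diff[OF _ tendsto_const, of _ "phi w" _ "phi w"] by simp
    qed
    show "\<forall>\<^sub>F L in at_top. AE w in lborel. norm (phi (qL L w) - phi w) \<le> Gb w"
      using eventually_ge_at_top[of "1::real"]
      by eventually_elim (auto intro!: phi_diff_bound qL_close)
  qed
  then show ?thesis unfolding CC_def using tendsto_mult[OF tendsto_const[of "1/4"]] by fastforce
qed



definition cell :: "real \<Rightarrow> int \<times> int \<Rightarrow> (real \<times> real) set" where
  "cell d k = {of_int (fst k) * d ..< (of_int (fst k) + 1) * d} \<times> {of_int (snd k) * d ..< (of_int (snd k) + 1) * d}"

lemma cell_iff: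
  assumes "d > 0"
  shows "w \<in> cell d k \<longleftrightarrow> (\<lfloor>fst w / d\<rfloor>, \<lfloor>snd w / d\<rfloor>) = k"
proof -
  have *: "\<lfloor>x / d\<rfloor> = n \<longleftrightarrow> of_int n * d \<le> x \<and> x < (of_int n + 1) * d" for x n
    using assms by (simp add: floor_eq_iff field_simps)
  show ?thesis unfolding cell_def by (cases w; cases k) (auto simp: *)
qed

lemma cell_sets[measurable]: "cell d k \<in> sets lborel"
  unfolding cell_def by (simp add: borel_prod[symmetric])

lemma cell_emeasure:
  assumes "d > 0"
  shows "emeasure lborel (cell d k) = ennreal (d\<^sup>2)"
proof -
  have "emeasure (lborel::(real\<times>real) measure) (cell d k) = emeasure (lborel \<Otimes>\<^sub>M lborel) (cell d k)"
    by (simp only: lborel_prod)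
  also have "\<dots> = emeasure lborel {of_int (fst k) * d ..< (of_int (fst k) + 1) * d} *
      emeasure lborel {of_int (snd k) * d ..< (of_int (snd k) + 1) * d}"
    unfolding cell_def by (rule lborel.emeasure_pair_measure_Times) auto
  also have "\<dots> = ennreal d * ennreal d"
    using assms by (simp add: algebra_simps)
  finally show ?thesis by (simp add: power2_eq_square ennreal_mult assms less_imp_le)
qed

lemma cell_measure:
  assumes "d > 0"
  shows "measure lborel (cell d k) = d\<^sup>2"
  using cell_emeasure[OF assms] by (simp add: measure_def)

lemma cell_integrable: "d > 0 \<Longrightarrow> integrable lborel (indicator (cell d k) :: real \<times> real \<Rightarrow> real)"
  by (rule integrable_real_indicator) (use cell_sets[of d k] in \<open>auto simp: cell_emeasure\<close>)

lemma lattice_integral: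
  fixes F :: "int \<times> int \<Rightarrow> real" and d :: real
  assumes d: "d > 0" and S: "finite S" and F0: "\<And>k. k \<notin> S \<Longrightarrow> F k = 0"
  shows "integrable lborel (\<lambda>w::real\<times>real. F (\<lfloor>fst w / d\<rfloor>, \<lfloor>snd w / d\<rfloor>))"
    and "(\<integral>w. F (\<lfloor>fst w / d\<rfloor>, \<lfloor>snd w / d\<rfloor>) \<partial>(lborel::(real\<times>real) measure)) = d\<^sup>2 * (\<Sum>k\<in>S. F k)"
proof -
  have eq: "F (\<lfloor>fst w / d\<rfloor>, \<lfloor>snd w / d\<rfloor>) = (\<Sum>k\<in>S. F k * indicator (cell d k) w)" for w
  proof (cases "(\<lfloor>fst w / d\<rfloor>, \<lfloor>snd w / d\<rfloor>) \<in> S")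
    case True
    then have "(\<Sum>k\<in>S. F k * indicator (cell d k) w) = F (\<lfloor>fst w / d\<rfloor>, \<lfloor>snd w / d\<rfloor>)"
      by (subst sum.remove[OF S True]) (auto simp: cell_iff[OF d] indicator_def intro!: sum.neutral)
    then show ?thesis by simp
  next
    case False
    have "(\<Sum>k\<in>S. F k * indicator (cell d k) w) = 0"
      using False by (intro sum.neutral) (auto simp: cell_iff[OF d] indicator_def)
    then show ?thesis using F0[OF False] by simp
  qed
  show "integrable lborel (\<lambda>w. F (\<lfloor>fst w / d\<rfloor>, \<lfloor>snd w / d\<rfloor>))"
    unfolding eq using cell_integrable[OF d] by auto
  have "(\<integral>w. F (\<lfloor>fst w / d\<rfloor>, \<lfloor>snd w / d\<rfloor>) \<partial>lborel) = (\<Sum>k\<in>S. F k * d\<^sup>2)"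
  proof -
    have "(\<integral>w. (\<Sum>k\<in>S. F k * indicator (cell d k) w) \<partial>lborel) = (\<Sum>k\<in>S. \<integral>w. F k * indicator (cell d k) w \<partial>lborel)"
      by (rule Bochner_Integration.integral_sum[where f="\<lambda>k w. F k * indicator (cell d k) w"]) (use cell_integrable[OF d] in auto)
    also have "\<dots> = (\<Sum>k\<in>S. F k * d\<^sup>2)"
      using cell_measure[OF d] by simp
    finally show ?thesis unfolding eq .
  qed
  then show "(\<integral>w. F (\<lfloor>fst w / d\<rfloor>, \<lfloor>snd w / d\<rfloor>) \<partial>lborel) = d\<^sup>2 * (\<Sum>k\<in>S. F k)"
    by (simp add: sum_distrib_right mult.commute)
qed



definition Qc :: "real \<Rightarrow> (real \<times> real) set" where
  "Qc R = {w. \<bar>fst w\<bar> \<le> R \<and> \<bar>snd w\<bar> \<le> R}"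

lemma Qc_sets[measurable]: "Qc R \<in> sets lborel"
  unfolding Qc_def by measurable

lemma Qc_bounded: "bounded (Qc R)"
proof -
  have "Qc R \<subseteq> cball 0 (2 * \<bar>R\<bar>)"
  proof
    fix w assume "w \<in> Qc R"
    then have "\<bar>fst w\<bar> \<le> R" "\<bar>snd w\<bar> \<le> R" unfolding Qc_def by auto
    then have "norm w \<le> \<bar>fst w\<bar> + \<bar>snd w\<bar>"
      by (cases w) (simp add: norm_Pair sqrt_le_D real_sqrt_le_iff norm_le_l1 sqrt_sum_squares_le_sum_abs)
    then show "w \<in> cball 0 (2 * \<bar>R\<bar>)" using \<open>\<bar>fst w\<bar> \<le> R\<close> \<open>\<bar>snd w\<bar> \<le> R\<close> by auto
  qed
  then show ?thesis using bounded_cball bounded_subset by blast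
qed

lemma Qc_integrable: "integrable lborel (indicator (Qc R) :: real \<times> real \<Rightarrow> real)"
  using Qc_sets[of R] emeasure_bounded_finite[OF Qc_bounded[of R]]
  by (intro integrable_real_indicator) auto

lemma integrable_Qc_bound:
  fixes f :: "real \<times> real \<Rightarrow> real"
  assumes "f \<in> borel_measurable lborel" "\<And>w. \<bar>f w\<bar> \<le> c * indicator (Qc R) w"
  shows "integrable lborel f"
proof (rule Bochner_Integration.integrable_bound)
  show "integrable lborel (\<lambda>w. c * indicator (Qc R) w)" using Qc_integrable by simp
  show "AE x in lborel. norm (f x) \<le> norm (c * indicator (Qc R) x)"
    by (rule AE_I2) (simp only: real_norm_def, rule order_trans[OF assms(2) abs_ge_self])
qed fact



lemma arctan_int:
  fixes c :: real assumes c: "c > 0"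
  shows "(LBINT y. indicator {-c..c} y * (1 / (c\<^sup>2 + y\<^sup>2))) = pi / (2 * c)"
proof -
  have "(LBINT y. indicator {-c..c} y *\<^sub>R (1 / (c\<^sup>2 + y\<^sup>2))) = arctan (c/c) / c - arctan (-c/c) / c"
  proof (rule integral_FTC_atLeastAtMost[where F = "\<lambda>y. arctan (y/c) / c"])
    show "-c \<le> c" using c by simp
    show "((\<lambda>y. arctan (y/c) / c) has_vector_derivative 1 / (c\<^sup>2 + x\<^sup>2)) (at x within {-c..c})" for x
    proof -
      have "0 < c*(c*c) + c*(x*x)" using c by (intro add_pos_nonneg) auto
      have "((\<lambda>y. arctan (y/c) / c) has_real_derivative (inverse (1 + (x/c)\<^sup>2) * (1/c)) / c) (at x)"
        using c by (auto intro!: derivative_eq_intros)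
      moreover have "(inverse (1 + (x/c)\<^sup>2) * (1/c)) / c = 1 / (c\<^sup>2 + x\<^sup>2)"
        using c \<open>0 < c*(c*c) + c*(x*x)\<close> by (simp add: field_simps power2_eq_square)
      ultimately show ?thesis
        by (simp add: has_real_derivative_iff_has_vector_derivative[symmetric] has_field_derivative_at_within)
    qed
    show "continuous_on {-c..c} (\<lambda>x. 1 / (c\<^sup>2 + x\<^sup>2))"
      using c by (intro continuous_intros) (auto simp: add_pos_nonneg)
  qed
  also have "\<dots> = pi / (2 * c)" using c by (simp add: arctan_minus field_simps)
  finally show ?thesis by simp
qed

lemma ln_int:
  fixes R :: real assumes R: "R \<ge> 1"
  shows "(LBINT x. indicator {1..R} x * (1 / x)) = ln R"
proof -
  have "(LBINT x. indicator {1..R} x *\<^sub>R (1 / x)) = ln R - ln 1"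
  proof (rule integral_FTC_atLeastAtMost[where F = ln])
    show "1 \<le> R" by fact
    show "(ln has_vector_derivative 1 / x) (at x within {1..R})" if "1 \<le> x" "x \<le> R" for x
    proof -
      have "(ln has_real_derivative 1 / x) (at x)" using DERIV_ln[of x] that by (simp add: inverse_eq_divide)
      then show ?thesis
        by (simp add: has_real_derivative_iff_has_vector_derivative[symmetric] has_field_derivative_at_within inverse_eq_divide)
    qed
    show "continuous_on {1..R} (\<lambda>x. 1 / x)"
      by (intro continuous_intros) auto
  qed
  then show ?thesis by simp
qed

lemma ln_int2:
  fixes R :: real assumes R: "R \<ge> 1"
  shows "(LBINT x. indicator {x. 1 < \<bar>x\<bar> \<and> \<bar>x\<bar> \<le> R} x * (1 / \<bar>x\<bar>)) = 2 * ln R"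
proof -
  have i1: "integrable lborel (\<lambda>x::real. indicator {1..R} x * (1 / x))"
    using borel_integrable_atLeastAtMost'[of 1 R "\<lambda>x. 1 / x"]
    unfolding set_integrable_def by (simp add: continuous_on_divide continuous_on_const continuous_on_id)
  have e1: "(LBINT x. indicator {1<..R} x * (1 / \<bar>x\<bar>)) = ln R"
  proof -
    have "(LBINT x. indicator {1<..R} x * (1 / \<bar>x\<bar>)) = (LBINT x. indicator {1..R} x * (1 / x))"
      by (rule integral_cong_AE) (auto intro!: eventually_mono[OF AE_lborel_singleton[of 1]] simp: indicator_def)
    then show ?thesis using ln_int[OF R] by simp
  qed
  have i1': "integrable lborel (\<lambda>x::real. indicator {1<..R} x * (1 / \<bar>x\<bar>))"
  proof (rule integrable_cong_AE_imp[OF i1])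
    show "(\<lambda>x::real. indicator {1<..R} x * (1 / \<bar>x\<bar>)) \<in> borel_measurable lborel" by measurable
    show "AE x in lborel. indicator {1..R} x * (1 / x) = indicator {1<..R} x * (1 / \<bar>x\<bar>)"
      by (auto intro!: eventually_mono[OF AE_lborel_singleton[of 1]] simp: indicator_def)
  qed
  have e2: "(LBINT x. indicator {-R..<-1} x * (1 / \<bar>x\<bar>)) = ln R"
  proof -
    have "(LBINT x. indicator {-R..<-1} x * (1 / \<bar>x\<bar>)) = \<bar>-1\<bar> *\<^sub>R (LBINT x. indicator {-R..<-1} (0 + -1 * x) * (1 / \<bar>0 + -1 * x\<bar>))"
      by (rule lborel_integral_real_affine) simp
    also have "\<dots> = (LBINT x. indicator {1<..R} x * (1 / \<bar>x\<bar>))"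
      by (simp, intro Bochner_Integration.integral_cong) (auto simp: indicator_def)
    finally show ?thesis using e1 by simp
  qed
  have i2: "integrable lborel (\<lambda>x::real. indicator {-R..<-1} x * (1 / \<bar>x\<bar>))"
  proof -
    have "integrable lborel (\<lambda>x::real. indicator {1<..R} (0 + -1 * x) * (1 / \<bar>0 + -1 * x\<bar>))"
      using lborel_integrable_real_affine[OF i1', of "-1" 0] by simp
    moreover have "(\<lambda>x::real. indicator {1<..R} (0 + -1 * x) * (1 / \<bar>0 + -1 * x\<bar>)) = (\<lambda>x. indicator {-R..<-1} x * (1 / \<bar>x\<bar>))"
      by (rule ext) (auto simp: indicator_def)
    ultimately show ?thesis by simp
  qed
  have "(LBINT x. indicator {x. 1 < \<bar>x\<bar> \<and> \<bar>x\<bar> \<le> R} x * (1 / \<bar>x\<bar>)) =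
        (LBINT x. indicator {1<..R} x * (1 / \<bar>x\<bar>) + indicator {-R..<-1} x * (1 / \<bar>x\<bar>))"
    by (intro Bochner_Integration.integral_cong) (auto simp: indicator_def)
  also have "\<dots> = 2 * ln R" using i1' i2 e1 e2 by simp
  finally show ?thesis .
qed



definition nrm :: "real \<times> real \<Rightarrow> real" where "nrm w = (fst w)\<^sup>2 + (snd w)\<^sup>2"

lemma nrm_meas[measurable]: "nrm \<in> borel_measurable borel" unfolding nrm_def by measurable

definition SA :: "real \<Rightarrow> (real \<times> real) set" where
  "SA R = {w. \<bar>snd w\<bar> \<le> \<bar>fst w\<bar> \<and> 1 < \<bar>fst w\<bar> \<and> \<bar>fst w\<bar> \<le> R}"
definition SB :: "real \<Rightarrow> (real \<times> real) set" where
  "SB R = {w. \<bar>fst w\<bar> < \<bar>snd w\<bar> \<and> 1 < \<bar>snd w\<bar> \<and> \<bar>snd w\<bar> \<le> R}"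

lemma SA_sets[measurable]: "SA R \<in> sets lborel" unfolding SA_def by measurable
lemma SB_sets[measurable]: "SB R \<in> sets lborel" unfolding SB_def by measurable

lemma nrm_ge: "(fst w)\<^sup>2 \<le> nrm w" "(snd w)\<^sup>2 \<le> nrm w" unfolding nrm_def by auto

lemma sq_gt1: "1 < \<bar>x::real\<bar> \<Longrightarrow> 1 < x\<^sup>2"
  by (metis abs_power2 one_less_power pos2 power2_abs)

lemma int_SA: "integrable lborel (\<lambda>w. indicator (SA R) w / nrm w)"
proof (rule integrable_Qc_bound[where c=1 and R=R])
  show "(\<lambda>w. indicator (SA R) w / nrm w) \<in> borel_measurable lborel" by measurable
  show "\<bar>indicator (SA R) w / nrm w\<bar> \<le> 1 * indicator (Qc R) w" for w
  proof (cases "w \<in> SA R")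
    case True
    then have "1 < (fst w)\<^sup>2" unfolding SA_def by (auto intro: sq_gt1)
    then have "1 < nrm w" using nrm_ge(1)[of w] by linarith
    moreover have "w \<in> Qc R" using True unfolding SA_def Qc_def by auto
    ultimately show ?thesis using True by auto
  qed auto
qed

lemma int_SB: "integrable lborel (\<lambda>w. indicator (SB R) w / nrm w)"
proof (rule integrable_Qc_bound[where c=1 and R=R])
  show "(\<lambda>w. indicator (SB R) w / nrm w) \<in> borel_measurable lborel" by measurable
  show "\<bar>indicator (SB R) w / nrm w\<bar> \<le> 1 * indicator (Qc R) w" for w
  proof (cases "w \<in> SB R")
    case True
    then have "1 < (snd w)\<^sup>2" unfolding SB_def by (auto intro: sq_gt1)
    then have "1 < nrm w" using nrm_ge(2)[of w] by linarith
    moreover have "w \<in> Qc R" using True unfolding SB_def Qc_def by auto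
    ultimately show ?thesis using True by auto
  qed auto
qed

lemma outer_int:
  assumes R: "R \<ge> 1"
  shows "(LBINT x. indicator {x. 1 < \<bar>x\<bar> \<and> \<bar>x\<bar> \<le> R} x * (pi / (2 * \<bar>x\<bar>))) = pi * ln R"
proof -
  have "(LBINT x. indicator {x. 1 < \<bar>x\<bar> \<and> \<bar>x\<bar> \<le> R} x * (pi / (2 * \<bar>x\<bar>)))
      = (LBINT x. (pi/2) * (indicator {x. 1 < \<bar>x\<bar> \<and> \<bar>x\<bar> \<le> R} x * (1 / \<bar>x\<bar>)))"
    by (intro Bochner_Integration.integral_cong) auto
  also have "\<dots> = (pi/2) * (LBINT x. indicator {x. 1 < \<bar>x\<bar> \<and> \<bar>x\<bar> \<le> R} x * (1 / \<bar>x\<bar>))"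
    by (rule integral_mult_right_zero)
  also have "\<dots> = (pi/2) * (2 * ln R)" by (simp only: ln_int2[OF R])
  finally show ?thesis by simp
qed

lemma SA_integral:
  assumes R: "R \<ge> 1"
  shows "(\<integral>w. indicator (SA R) w / nrm w \<partial>lborel) = pi * ln R"
proof -
  let ?f = "\<lambda>w. indicator (SA R) w / nrm w"
  have "integrable (lborel \<Otimes>\<^sub>M lborel) ?f" using int_SA[of R] by (simp only: lborel_prod)
  have "(\<integral>w. ?f w \<partial>lborel) = (\<integral>w. ?f w \<partial>(lborel \<Otimes>\<^sub>M lborel))" by (simp only: lborel_prod)
  also have "\<dots> = (LBINT x. LBINT y. ?f (x, y))"
    by (rule lborel_pair.integral_fst'[symmetric]) fact
  also have "\<dots> = (LBINT x. indicator {x. 1 < \<bar>x\<bar> \<and> \<bar>x\<bar> \<le> R} x * (pi / (2 * \<bar>x\<bar>)))"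
  proof (intro Bochner_Integration.integral_cong refl)
    fix x :: real
    show "(LBINT y. ?f (x, y)) = indicator {x. 1 < \<bar>x\<bar> \<and> \<bar>x\<bar> \<le> R} x * (pi / (2 * \<bar>x\<bar>))"
    proof (cases "1 < \<bar>x\<bar> \<and> \<bar>x\<bar> \<le> R")
      case True
      have "(LBINT y. ?f (x, y)) = (LBINT y. indicator {-\<bar>x\<bar>..\<bar>x\<bar>} y * (1 / (\<bar>x\<bar>\<^sup>2 + y\<^sup>2)))"
        using True by (intro Bochner_Integration.integral_cong) (auto simp: SA_def indicator_def nrm_def)
      also have "\<dots> = pi / (2 * \<bar>x\<bar>)" using True by (intro arctan_int) auto
      finally show ?thesis using True by simp
    next
      case False
      then have "(\<lambda>y. ?f (x, y)) = (\<lambda>y. 0)" by (auto simp: SA_def)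
      then show ?thesis using False by simp
    qed
  qed
  also have "\<dots> = pi * ln R" by (rule outer_int[OF R])
  finally show ?thesis .
qed

lemma SB_integral:
  assumes R: "R \<ge> 1"
  shows "(\<integral>w. indicator (SB R) w / nrm w \<partial>lborel) = pi * ln R"
proof -
  let ?f = "\<lambda>x y. indicator (SB R) (x, y) / nrm (x, y)"
  have cp: "case_prod ?f = (\<lambda>w. indicator (SB R) w / nrm w)" by (rule ext) auto
  have "integrable (lborel \<Otimes>\<^sub>M lborel) (case_prod ?f)" using int_SB[of R] by (simp only: lborel_prod cp)
  have "(\<integral>w. indicator (SB R) w / nrm w \<partial>lborel) = (\<integral>w. case_prod ?f w \<partial>(lborel \<Otimes>\<^sub>M lborel))" by (simp only: lborel_prod cp)
  also have "\<dots> = (LBINT y. LBINT x. ?f x y)"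
    by (rule lborel_pair.integral_snd[symmetric]) fact
  also have "\<dots> = (LBINT y. indicator {x. 1 < \<bar>x\<bar> \<and> \<bar>x\<bar> \<le> R} y * (pi / (2 * \<bar>y\<bar>)))"
  proof (intro Bochner_Integration.integral_cong refl)
    fix y :: real
    show "(LBINT x. ?f x y) = indicator {x. 1 < \<bar>x\<bar> \<and> \<bar>x\<bar> \<le> R} y * (pi / (2 * \<bar>y\<bar>))"
    proof (cases "1 < \<bar>y\<bar> \<and> \<bar>y\<bar> \<le> R")
      case True
      have "(LBINT x. ?f x y) = (LBINT x. indicator {-\<bar>y\<bar>..\<bar>y\<bar>} x * (1 / (\<bar>y\<bar>\<^sup>2 + x\<^sup>2)))"
      proof (rule integral_cong_AE)
        show "AE x in lborel. ?f x y = indicator {-\<bar>y\<bar>..\<bar>y\<bar>} x * (1 / (\<bar>y\<bar>\<^sup>2 + x\<^sup>2))"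
          using AE_lborel_singleton[of "\<bar>y\<bar>"] AE_lborel_singleton[of "-\<bar>y\<bar>"]
        proof eventually_elim
          case (elim x)
          then show ?case using True by (auto simp: SB_def indicator_def nrm_def add.commute)
        qed
      qed measurable
      also have "\<dots> = pi / (2 * \<bar>y\<bar>)" using True by (intro arctan_int) auto
      finally show ?thesis using True by simp
    next
      case False
      then have "(\<lambda>x. ?f x y) = (\<lambda>x. 0)" by (auto simp: SB_def)
      then show ?thesis using False by simp
    qed
  qed
  also have "\<dots> = pi * ln R" by (rule outer_int[OF R])
  finally show ?thesis .
qed

lemma log2d:
  assumes R: "R \<ge> 1"
  shows "integrable lborel (\<lambda>w. indicator (Qc R - Qc 1) w / nrm w)"
    and "(\<integral>w. indicator (Qc R - Qc 1) w / nrm w \<partial>lborel) = 2 * pi * ln R"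
proof -
  have eq: "indicator (Qc R - Qc 1) w / nrm w = indicator (SA R) w / nrm w + indicator (SB R) w / nrm w" for w
    by (auto simp: indicator_def Qc_def SA_def SB_def add_divide_distrib)
  show "integrable lborel (\<lambda>w. indicator (Qc R - Qc 1) w / nrm w)"
    unfolding eq using int_SA int_SB by simp
  show "(\<integral>w. indicator (Qc R - Qc 1) w / nrm w \<partial>lborel) = 2 * pi * ln R"
    unfolding eq using int_SA int_SB SA_integral[OF R] SB_integral[OF R] by simp
qed



definition psi :: "real \<times> real \<Rightarrow> real" where "psi w = 1 / (pi\<^sup>2 * nrm w) - phi w"

lemma psi_meas[measurable]: "psi \<in> borel_measurable borel" unfolding psi_def by measurable

lemma phi_nrm: "phi w = 1 / (1 + pi\<^sup>2 * nrm w)" unfolding phi_def nrm_def by simp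

lemma nrm_max: "(max \<bar>fst w\<bar> \<bar>snd w\<bar>)\<^sup>2 \<le> nrm w"
  unfolding nrm_def by (auto simp: max_def power2_eq_square abs_mult_self_eq)

lemma psi_bound:
  assumes "w \<notin> Qc 1"
  shows "0 \<le> psi w" "psi w \<le> Gb w"
proof -
  define m where "m = max \<bar>fst w\<bar> \<bar>snd w\<bar>"
  have m1: "m > 1" using assms unfolding Qc_def m_def by auto
  define n where "n = nrm w"
  have mn: "m\<^sup>2 \<le> n" using nrm_max unfolding m_def n_def by simp
  have n1: "n > 1" using mn m1 by (smt (verit) one_less_power pos2)
  have p9: "pi\<^sup>2 \<ge> 9" by (rule pi2_ge9)
  have a1: "pi\<^sup>2 * n > 0" using n1 by simp
  have a: "pi\<^sup>2 * n > 0" "1 + pi\<^sup>2 * n > 0" using a1 by linarith+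
  have e: "psi w = 1 / (pi\<^sup>2 * n * (1 + pi\<^sup>2 * n))"
  proof -
    have "1 / (pi\<^sup>2 * n) - 1 / (1 + pi\<^sup>2 * n) = (1 * (1 + pi\<^sup>2 * n) - 1 * (pi\<^sup>2 * n)) / (pi\<^sup>2 * n * (1 + pi\<^sup>2 * n))"
      using a by (intro diff_frac_eq) auto
    then show ?thesis unfolding psi_def phi_nrm n_def[symmetric] by simp
  qed
  show "0 \<le> psi w" unfolding e using n1 p9 by (simp add: add_pos_nonneg)
  have "n * n \<le> pi\<^sup>2 * n * (1 + pi\<^sup>2 * n)"
  proof -
    have "n \<le> pi\<^sup>2 * n" using n1 p9 by simp
    moreover have "n \<le> 1 + pi\<^sup>2 * n" using \<open>n \<le> pi\<^sup>2 * n\<close> by linarith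
    ultimately show ?thesis using n1 by (intro mult_mono) auto
  qed
  then have "psi w \<le> 1 / (n * n)" unfolding e using n1 a by (intro divide_left_mono) (auto intro!: mult_pos_pos)
  also have "\<dots> \<le> 1 / (m\<^sup>2 * m\<^sup>2)" using mn m1 n1 by (intro divide_left_mono mult_mono) (auto intro!: mult_pos_pos)
  also have "\<dots> \<le> 30 / (1+m)^3"
  proof -
    have "(1+m)^3 \<le> (2*m)^3" using m1 by (intro power_mono) auto
    also have "\<dots> = 8 * m^3" by (simp add: power_mult_distrib)
    also have "\<dots> \<le> 30 * m^3" using m1 by simp
    also have "\<dots> \<le> 30 * (m\<^sup>2 * m\<^sup>2)" using m1
      by (intro mult_left_mono) (auto simp: power2_eq_square power3_eq_cube)
    finally show ?thesis using m1 by (simp add: field_simps)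
  qed
  also have "\<dots> \<le> Gb w" using Gb_lower m_def by simp
  finally show "psi w \<le> Gb w" .
qed

lemma Qc_phi_int: "integrable lborel (\<lambda>w. indicator (Qc R) w * phi w)"
  by (rule integrable_Qc_bound[where c=1 and R=R]) (auto simp: indicator_def phi_pos less_imp_le phi_le1)

definition g0 :: real where
  "g0 = (\<integral>w. indicator (Qc 1) w * phi w \<partial>lborel) - (\<integral>w. indicator (- Qc 1) w * psi w \<partial>lborel)"

lemma G_eq:
  assumes R: "R \<ge> 1"
  shows "(\<integral>w. indicator (Qc R) w * phi w \<partial>lborel) - 2 / pi * ln R =
    (\<integral>w. indicator (Qc 1) w * phi w \<partial>lborel) - (\<integral>w. indicator (Qc R - Qc 1) w * psi w \<partial>lborel)"
proof -
  have sub: "Qc 1 \<subseteq> Qc R" using R unfolding Qc_def by auto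
  note L = log2d[OF R]
  have i3: "integrable lborel (\<lambda>w. indicator (Qc R - Qc 1) w * psi w)"
  proof -
    have "integrable lborel (\<lambda>w. (1/pi\<^sup>2) * (indicator (Qc R - Qc 1) w / nrm w) - indicator (Qc R) w * phi w)"
      using Bochner_Integration.integrable_mult_right[OF L(1), of "1/pi\<^sup>2"] Qc_phi_int
      by (intro Bochner_Integration.integrable_diff)
    moreover have "(\<lambda>w. (1/pi\<^sup>2) * (indicator (Qc R - Qc 1) w / nrm w) - indicator (Qc R) w * phi w)
      = (\<lambda>w. indicator (Qc R - Qc 1) w * psi w - indicator (Qc 1) w * phi w)"
      using sub by (auto simp: indicator_def psi_def fun_eq_iff)
    ultimately have "integrable lborel (\<lambda>w. indicator (Qc R - Qc 1) w * psi w - indicator (Qc 1) w * phi w)" by simp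
    then have "integrable lborel (\<lambda>w. (indicator (Qc R - Qc 1) w * psi w - indicator (Qc 1) w * phi w) + indicator (Qc 1) w * phi w)"
      using Qc_phi_int by (intro Bochner_Integration.integrable_add)
    then show ?thesis by simp
  qed
  have eq: "indicator (Qc R) w * phi w = indicator (Qc 1) w * phi w + (1/pi\<^sup>2) * (indicator (Qc R - Qc 1) w / nrm w)
      - indicator (Qc R - Qc 1) w * psi w" for w
    using sub by (auto simp: indicator_def psi_def)
  have "(\<integral>w. indicator (Qc R) w * phi w \<partial>lborel) = (\<integral>w. indicator (Qc 1) w * phi w \<partial>lborel)
     + (1/pi\<^sup>2) * (\<integral>w. indicator (Qc R - Qc 1) w / nrm w \<partial>lborel) - (\<integral>w. indicator (Qc R - Qc 1) w * psi w \<partial>lborel)"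
  proof -
    have i2: "integrable lborel (\<lambda>w. (1/pi\<^sup>2) * (indicator (Qc R - Qc 1) w / nrm w))"
      by (rule Bochner_Integration.integrable_mult_right[OF L(1)])
    have "(\<integral>w. indicator (Qc R) w * phi w \<partial>lborel) = (\<integral>w. indicator (Qc 1) w * phi w + (1/pi\<^sup>2) * (indicator (Qc R - Qc 1) w / nrm w)
      - indicator (Qc R - Qc 1) w * psi w \<partial>lborel)" unfolding eq ..
    also have "\<dots> = (\<integral>w. indicator (Qc 1) w * phi w + (1/pi\<^sup>2) * (indicator (Qc R - Qc 1) w / nrm w) \<partial>lborel)
      - (\<integral>w. indicator (Qc R - Qc 1) w * psi w \<partial>lborel)"
      by (rule Bochner_Integration.integral_diff[OF Bochner_Integration.integrable_add[OF Qc_phi_int i2] i3])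
    also have "(\<integral>w. indicator (Qc 1) w * phi w + (1/pi\<^sup>2) * (indicator (Qc R - Qc 1) w / nrm w) \<partial>lborel)
      = (\<integral>w. indicator (Qc 1) w * phi w \<partial>lborel) + (\<integral>w. (1/pi\<^sup>2) * (indicator (Qc R - Qc 1) w / nrm w) \<partial>lborel)"
      by (rule Bochner_Integration.integral_add[OF Qc_phi_int i2])
    also have "(\<integral>w. (1/pi\<^sup>2) * (indicator (Qc R - Qc 1) w / nrm w) \<partial>lborel) = (1/pi\<^sup>2) * (\<integral>w. indicator (Qc R - Qc 1) w / nrm w \<partial>lborel)"
      by (rule integral_mult_right_zero)
    finally show ?thesis .
  qed
  also have "(1/pi\<^sup>2) * (\<integral>w. indicator (Qc R - Qc 1) w / nrm w \<partial>lborel) = 2 / pi * ln R"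
    unfolding L(2) by (simp add: power2_eq_square)
  finally show ?thesis by simp
qed

lemma G_tendsto: "((\<lambda>R. (\<integral>w. indicator (Qc R) w * phi w \<partial>lborel) - 2 / pi * ln R) \<longlongrightarrow> g0) at_top"
proof -
  have lim: "((\<lambda>R. \<integral>w. indicator (Qc R - Qc 1) w * psi w \<partial>lborel) \<longlongrightarrow> (\<integral>w. indicator (- Qc 1) w * psi w \<partial>lborel)) at_top"
  proof (rule integral_dominated_convergence_at_top[where w = Gb])
    show "(\<lambda>w. indicator (- Qc 1) w * psi w) \<in> borel_measurable lborel" by measurable
    show "(\<lambda>w. indicator (Qc R - Qc 1) w * psi w) \<in> borel_measurable lborel" for R by measurable
    show "integrable lborel Gb" by (rule Gb_int)
    show "AE w in lborel. ((\<lambda>R. indicator (Qc R - Qc 1) w * psi w) \<longlongrightarrow> indicator (- Qc 1) w * psi w) at_top"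
    proof (rule AE_I2)
      fix w :: "real \<times> real"
      have "\<forall>\<^sub>F R in at_top. indicator (Qc R - Qc 1) w * psi w = indicator (- Qc 1) w * psi w"
        using eventually_ge_at_top[of "max \<bar>fst w\<bar> \<bar>snd w\<bar>"]
        by eventually_elim (auto simp: indicator_def Qc_def)
      then show "((\<lambda>R. indicator (Qc R - Qc 1) w * psi w) \<longlongrightarrow> indicator (- Qc 1) w * psi w) at_top"
        by (rule tendsto_eventually)
    qed
    show "\<forall>\<^sub>F R in at_top. AE w in lborel. norm (indicator (Qc R - Qc 1) w * psi w) \<le> Gb w"
      by (intro always_eventually allI AE_I2) (auto simp: indicator_def psi_bound less_imp_le[OF Gb_pos])
  qed
  have "((\<lambda>R. (\<integral>w. indicator (Qc 1) w * phi w \<partial>lborel) - (\<integral>w. indicator (Qc R - Qc 1) w * psi w \<partial>lborel)) \<longlongrightarrow> g0) at_top"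
    unfolding g0_def by (intro tendsto_diff tendsto_const lim)
  moreover have "\<forall>\<^sub>F R in at_top. (\<integral>w. indicator (Qc 1) w * phi w \<partial>lborel) - (\<integral>w. indicator (Qc R - Qc 1) w * psi w \<partial>lborel)
     = (\<integral>w. indicator (Qc R) w * phi w \<partial>lborel) - 2 / pi * ln R"
    using eventually_ge_at_top[of "1::real"] by eventually_elim (simp only: G_eq)
  ultimately show ?thesis by (rule Lim_transform_eventually)
qed



lemma fl_in:
  fixes L a R :: real
  assumes L: "L \<ge> 1"
  shows "\<bar>a\<bar> \<le> R - 1 \<Longrightarrow> \<bar>real_of_int \<lfloor>L * a\<rfloor> / L\<bar> \<le> R"
    and "\<bar>real_of_int \<lfloor>L * a\<rfloor> / L\<bar> \<le> R \<Longrightarrow> \<bar>a\<bar> \<le> R + 1"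
proof -
  have L0: "L > 0" using L by simp
  have L1: "1 / L \<le> 1" using L by simp
  define X where "X = real_of_int \<lfloor>L * a\<rfloor> / L"
  have a: "X \<le> a" "a - 1 / L < X" using floor_div_close[OF L0, of a] unfolding X_def by auto
  show "\<bar>a\<bar> \<le> R - 1 \<Longrightarrow> \<bar>real_of_int \<lfloor>L * a\<rfloor> / L\<bar> \<le> R"
    unfolding X_def[symmetric] using a L1 by linarith
  show "\<bar>real_of_int \<lfloor>L * a\<rfloor> / L\<bar> \<le> R \<Longrightarrow> \<bar>a\<bar> \<le> R + 1"
    unfolding X_def[symmetric] using a L1 by linarith
qed

lemma qL_in_Qc1:
  assumes L: "L \<ge> 1"
  shows "indicator (Qc (R - 1)) w \<le> (indicator (Qc R) (qL L w) :: real)"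
proof -
  have "qL L w \<in> Qc R" if "w \<in> Qc (R - 1)"
    using that fl_in(1)[OF L] unfolding Qc_def qL_def by auto
  then show ?thesis by (auto simp: indicator_def)
qed

lemma qL_in_Qc2:
  assumes L: "L \<ge> 1"
  shows "indicator (Qc R) (qL L w) \<le> (indicator (Qc (R + 1)) w :: real)"
proof -
  have "w \<in> Qc (R + 1)" if "qL L w \<in> Qc R"
    using that fl_in(2)[OF L] unfolding Qc_def qL_def by auto
  then show ?thesis by (auto simp: indicator_def)
qed

lemma Gf_shift:
  fixes c :: real
  shows "((\<lambda>R. (\<integral>w. indicator (Qc (R + c)) w * phi w \<partial>lborel) - 2 / pi * ln R) \<longlongrightarrow> g0) at_top"
proof -
  have f: "filterlim (\<lambda>R. R + c) at_top at_top" by real_asymp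
  have "((\<lambda>R. (\<integral>w. indicator (Qc (R + c)) w * phi w \<partial>lborel) - 2 / pi * ln (R + c)) \<longlongrightarrow> g0) at_top"
    using filterlim_compose[OF G_tendsto f] by simp
  moreover have "((\<lambda>R. 2 / pi * (ln (R + c) - ln R)) \<longlongrightarrow> 0) at_top"
    by real_asymp
  ultimately have "((\<lambda>R. ((\<integral>w. indicator (Qc (R + c)) w * phi w \<partial>lborel) - 2 / pi * ln (R + c)) + 2 / pi * (ln (R + c) - ln R)) \<longlongrightarrow> g0 + 0) at_top"
    by (rule tendsto_add)
  then show ?thesis by (simp add: algebra_simps)
qed

lemma P1_I_tendsto:
  assumes L: "L \<ge> 1"
  shows "((\<lambda>R. (\<integral>w. indicator (Qc R) (qL L w) * phi w \<partial>lborel) - 2 / pi * ln R) \<longlongrightarrow> g0) at_top"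
proof (rule tendsto_sandwich[OF _ _ Gf_shift[of "-1"] Gf_shift[of 1]])
  show "\<forall>\<^sub>F R in at_top. (\<integral>w. indicator (Qc (R + - 1)) w * phi w \<partial>lborel) - 2 / pi * ln R
      \<le> (\<integral>w. indicator (Qc R) (qL L w) * phi w \<partial>lborel) - 2 / pi * ln R"
    using eventually_ge_at_top[of "1::real"]
  proof eventually_elim
    case (elim R)
    have "(\<integral>w. indicator (Qc (R - 1)) w * phi w \<partial>lborel) \<le> (\<integral>w. indicator (Qc R) (qL L w) * phi w \<partial>lborel)"
    proof (rule integral_mono)
      show "integrable lborel (\<lambda>w. indicator (Qc (R - 1)) w * phi w)" by (rule Qc_phi_int)
      show "integrable lborel (\<lambda>w. indicator (Qc R) (qL L w) * phi w)"
        by (rule integrable_Qc_bound[where c=1 and R="R+1"])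
           (use qL_in_Qc2[OF L] in \<open>auto simp: indicator_def phi_pos less_imp_le phi_le1\<close>)
      show "indicator (Qc (R - 1)) w * phi w \<le> indicator (Qc R) (qL L w) * phi w" for w
        using qL_in_Qc1[OF L, of R w] phi_pos[of w] by (intro mult_right_mono) auto
    qed
    then show ?case by simp
  qed
  show "\<forall>\<^sub>F R in at_top. (\<integral>w. indicator (Qc R) (qL L w) * phi w \<partial>lborel) - 2 / pi * ln R
      \<le> (\<integral>w. indicator (Qc (R + 1)) w * phi w \<partial>lborel) - 2 / pi * ln R"
    using eventually_ge_at_top[of "1::real"]
  proof eventually_elim
    case (elim R)
    have "(\<integral>w. indicator (Qc R) (qL L w) * phi w \<partial>lborel) \<le> (\<integral>w. indicator (Qc (R + 1)) w * phi w \<partial>lborel)"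
    proof (rule integral_mono)
      show "integrable lborel (\<lambda>w. indicator (Qc (R + 1)) w * phi w)" by (rule Qc_phi_int)
      show "integrable lborel (\<lambda>w. indicator (Qc R) (qL L w) * phi w)"
        by (rule integrable_Qc_bound[where c=1 and R="R+1"])
           (use qL_in_Qc2[OF L] in \<open>auto simp: indicator_def phi_pos less_imp_le phi_le1\<close>)
      show "indicator (Qc R) (qL L w) * phi w \<le> indicator (Qc (R + 1)) w * phi w" for w
        using qL_in_Qc2[OF L, of R w] phi_pos[of w] by (intro mult_right_mono) auto
    qed
    then show ?case by simp
  qed
qed

lemma P1_E_tendsto:
  assumes L: "L \<ge> 1"
  shows "((\<lambda>R. \<integral>w. indicator (Qc R) (qL L w) * (phi (qL L w) - phi w) \<partial>lborel) \<longlongrightarrow> 4 * CC L) at_top"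
proof -
  have "((\<lambda>R. \<integral>w. indicator (Qc R) (qL L w) * (phi (qL L w) - phi w) \<partial>lborel) \<longlongrightarrow> (\<integral>w. phi (qL L w) - phi w \<partial>lborel)) at_top"
  proof (rule integral_dominated_convergence_at_top[where w = Gb])
    show "(\<lambda>w. phi (qL L w) - phi w) \<in> borel_measurable lborel" by measurable
    show "(\<lambda>w. indicator (Qc R) (qL L w) * (phi (qL L w) - phi w)) \<in> borel_measurable lborel" for R by measurable
    show "integrable lborel Gb" by (rule Gb_int)
    show "AE w in lborel. ((\<lambda>R. indicator (Qc R) (qL L w) * (phi (qL L w) - phi w)) \<longlongrightarrow> phi (qL L w) - phi w) at_top"
    proof (rule AE_I2)
      fix w :: "real \<times> real"
      have "\<forall>\<^sub>F R in at_top. indicator (Qc R) (qL L w) * (phi (qL L w) - phi w) = phi (qL L w) - phi w"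
        using eventually_ge_at_top[of "max \<bar>fst (qL L w)\<bar> \<bar>snd (qL L w)\<bar>"]
        by eventually_elim (auto simp: indicator_def Qc_def)
      then show "((\<lambda>R. indicator (Qc R) (qL L w) * (phi (qL L w) - phi w)) \<longlongrightarrow> phi (qL L w) - phi w) at_top"
        by (rule tendsto_eventually)
    qed
    show "\<forall>\<^sub>F R in at_top. AE w in lborel. norm (indicator (Qc R) (qL L w) * (phi (qL L w) - phi w)) \<le> Gb w"
      using phi_diff_bound[OF qL_close[OF L]] Gb_pos
      by (intro always_eventually allI AE_I2) (auto simp: indicator_def less_imp_le)
  qed
  then show ?thesis unfolding CC_def by simp
qed

lemma P1_limit:
  assumes L: "L \<ge> 1" and s: "s > 0"
  shows "((\<lambda>t. (1/4) * (\<integral>w. indicator (Qc (s * t)) (qL L w) * phi (qL L w) \<partial>lborel) - ln t / (2 * pi))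
     \<longlongrightarrow> g0 / 4 + ln s / (2 * pi) + CC L) at_top"
proof -
  have f: "filterlim (\<lambda>t. s * t) at_top at_top" using s by real_asymp
  have I: "((\<lambda>t. (\<integral>w. indicator (Qc (s * t)) (qL L w) * phi w \<partial>lborel) - 2 / pi * ln (s * t)) \<longlongrightarrow> g0) at_top"
    using filterlim_compose[OF P1_I_tendsto[OF L] f] by simp
  have E: "((\<lambda>t. \<integral>w. indicator (Qc (s * t)) (qL L w) * (phi (qL L w) - phi w) \<partial>lborel) \<longlongrightarrow> 4 * CC L) at_top"
    using filterlim_compose[OF P1_E_tendsto[OF L] f] by simp
  have lim: "((\<lambda>t. (1/4) * ((\<integral>w. indicator (Qc (s * t)) (qL L w) * phi w \<partial>lborel) - 2 / pi * ln (s * t))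
      + (1/4) * (\<integral>w. indicator (Qc (s * t)) (qL L w) * (phi (qL L w) - phi w) \<partial>lborel) + ln s / (2 * pi))
     \<longlongrightarrow> (1/4) * g0 + (1/4) * (4 * CC L) + ln s / (2 * pi)) at_top"
    by (intro tendsto_intros I E)
  have ev: "\<forall>\<^sub>F t in at_top. (1/4) * ((\<integral>w. indicator (Qc (s * t)) (qL L w) * phi w \<partial>lborel) - 2 / pi * ln (s * t))
      + (1/4) * (\<integral>w. indicator (Qc (s * t)) (qL L w) * (phi (qL L w) - phi w) \<partial>lborel) + ln s / (2 * pi)
     = (1/4) * (\<integral>w. indicator (Qc (s * t)) (qL L w) * phi (qL L w) \<partial>lborel) - ln t / (2 * pi)"
    using eventually_ge_at_top[of "1::real"]
  proof eventually_elim
    case (elim t)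
    have st: "s * t \<ge> 1 \<or> True" by simp
    have i1: "integrable lborel (\<lambda>w. indicator (Qc (s * t)) (qL L w) * phi w)"
      by (rule integrable_Qc_bound[where c=1 and R="s*t+1"])
         (use qL_in_Qc2[OF L, of "s*t"] in \<open>auto simp: indicator_def phi_pos less_imp_le phi_le1\<close>)
    have i2: "integrable lborel (\<lambda>w. indicator (Qc (s * t)) (qL L w) * (phi (qL L w) - phi w))"
    proof (rule integrable_Qc_bound[where c=1 and R="s*t+1"])
      fix w
      have "\<bar>phi (qL L w) - phi w\<bar> \<le> 1" using phi_pos[of w] phi_pos[of "qL L w"] phi_le1[of w] phi_le1[of "qL L w"] by linarith
      then show "\<bar>indicator (Qc (s * t)) (qL L w) * (phi (qL L w) - phi w)\<bar> \<le> 1 * indicator (Qc (s * t + 1)) w"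
        using qL_in_Qc2[OF L, of "s*t" w] by (auto simp: indicator_def split: if_splits)
    qed measurable
    have "(\<integral>w. indicator (Qc (s * t)) (qL L w) * phi (qL L w) \<partial>lborel) =
       (\<integral>w. indicator (Qc (s * t)) (qL L w) * phi w + indicator (Qc (s * t)) (qL L w) * (phi (qL L w) - phi w) \<partial>lborel)"
      by (intro Bochner_Integration.integral_cong) (auto simp: algebra_simps)
    also have "\<dots> = (\<integral>w. indicator (Qc (s * t)) (qL L w) * phi w \<partial>lborel) + (\<integral>w. indicator (Qc (s * t)) (qL L w) * (phi (qL L w) - phi w) \<partial>lborel)"
      by (rule Bochner_Integration.integral_add[OF i1 i2])
    finally have "(\<integral>w. indicator (Qc (s * t)) (qL L w) * phi (qL L w) \<partial>lborel) = \<dots>" .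
    moreover have "ln (s * t) = ln s + ln t" using s elim by (simp add: ln_mult)
    ultimately show ?case by (simp add: field_simps)
  qed
  show ?thesis
    using Lim_transform_eventually[OF lim ev] by (simp add: algebra_simps)
qed



lemma lattice_meas:
  fixes F :: "int \<times> int \<Rightarrow> real" and M :: real
  shows "(\<lambda>x::real\<times>real. F (\<lfloor>M * fst x\<rfloor>, \<lfloor>M * snd x\<rfloor>)) \<in> borel_measurable lborel"
proof -
  have g: "(\<lambda>x::real\<times>real. (\<lfloor>M * fst x\<rfloor>, \<lfloor>M * snd x\<rfloor>)) \<in> measurable lborel (count_space UNIV)"
  proof (rule measurable_count_space_eq_countable[THEN iffD2])
    show "countable (UNIV :: (int \<times> int) set)" by simp
    have "(\<lambda>x::real\<times>real. (\<lfloor>M * fst x\<rfloor>, \<lfloor>M * snd x\<rfloor>)) -` {a} \<inter> space lborel \<in> sets lborel" for a :: "int \<times> int"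
    proof -
      have "(\<lambda>x::real\<times>real. (\<lfloor>M * fst x\<rfloor>, \<lfloor>M * snd x\<rfloor>)) -` {a} \<inter> space lborel = {x. \<lfloor>M * fst x\<rfloor> = fst a \<and> \<lfloor>M * snd x\<rfloor> = snd a}"
        by (cases a) auto
      moreover have "{x::real\<times>real. \<lfloor>M * fst x\<rfloor> = fst a \<and> \<lfloor>M * snd x\<rfloor> = snd a} \<in> sets borel"
        by measurable
      ultimately show ?thesis by simp
    qed
    then show "(\<lambda>x::real\<times>real. (\<lfloor>M * fst x\<rfloor>, \<lfloor>M * snd x\<rfloor>)) \<in> space lborel \<rightarrow> UNIV \<and>
      (\<forall>a\<in>UNIV. (\<lambda>x::real\<times>real. (\<lfloor>M * fst x\<rfloor>, \<lfloor>M * snd x\<rfloor>)) -` {a} \<inter> space lborel \<in> sets lborel)" by auto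
  qed
  show ?thesis
    by (rule measurable_compose_countable'[where f = "\<lambda>k x. F k" and I = UNIV, OF _ g]) auto
qed

lemma U_meas:
  fixes u :: "real \<times> real \<Rightarrow> real"
  shows "(\<lambda>x. u (qL M x) / (c + pi\<^sup>2 * nrm (qL M x))) \<in> borel_measurable lborel"
proof -
  have "(\<lambda>x. u (qL M x) / (c + pi\<^sup>2 * nrm (qL M x))) =
     (\<lambda>x. (\<lambda>k. u (real_of_int (fst k) / M, real_of_int (snd k) / M) /
         (c + pi\<^sup>2 * nrm (real_of_int (fst k) / M, real_of_int (snd k) / M))) (\<lfloor>M * fst x\<rfloor>, \<lfloor>M * snd x\<rfloor>))"
    unfolding qL_def by simp
  then show ?thesis using lattice_meas by simp
qed

lemma nrm_cont: "isCont nrm x" unfolding nrm_def by (intro continuous_intros)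

lemma P2_pointwise:
  fixes u :: "real \<times> real \<Rightarrow> real"
  assumes L: "L \<ge> 1" and s: "s > 0" and us: "\<And>x. x \<in> Qc s \<Longrightarrow> u x = 0" and c: "isCont u x"
  shows "((\<lambda>t. u (qL (t * L) x) / (1 / t\<^sup>2 + pi\<^sup>2 * nrm (qL (t * L) x))) \<longlongrightarrow> u x / (pi\<^sup>2 * nrm x)) at_top"
proof (cases "x = 0")
  case True
  have "qL M 0 = 0" for M unfolding qL_def by (simp add: zero_prod_def)
  moreover have "u 0 = 0" using us s by (simp add: Qc_def)
  ultimately show ?thesis using True by simp
next
  case False
  have f: "filterlim (\<lambda>t. t * L) at_top at_top" using L by real_asymp
  have q: "((\<lambda>t. qL (t * L) x) \<longlongrightarrow> x) at_top"
    using filterlim_compose[OF qL_tendsto f] .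
  have n0: "nrm x \<noteq> 0" using False unfolding nrm_def
    by (cases x) (auto simp: prod_eq_iff)
  have "((\<lambda>t. u (qL (t * L) x)) \<longlongrightarrow> u x) at_top" using isCont_tendsto_compose[OF c q] .
  moreover have "((\<lambda>t. 1 / t\<^sup>2 + pi\<^sup>2 * nrm (qL (t * L) x)) \<longlongrightarrow> 0 + pi\<^sup>2 * nrm x) at_top"
    by (intro tendsto_add tendsto_mult tendsto_const isCont_tendsto_compose[OF nrm_cont q]) real_asymp
  ultimately show ?thesis using n0 by (intro tendsto_divide) auto
qed

lemma P2_bound:
  fixes u :: "real \<times> real \<Rightarrow> real"
  assumes M: "M \<ge> 1" and s: "s > 0" and u1: "\<And>x. \<bar>u x\<bar> \<le> 1" and us: "\<And>x. x \<in> Qc s \<Longrightarrow> u x = 0"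
    and ub: "\<And>x. x \<notin> Qc b \<Longrightarrow> u x = 0" and c: "c \<ge> 0"
  shows "\<bar>u (qL M x) / (c + pi\<^sup>2 * nrm (qL M x))\<bar> \<le> (1 / (pi\<^sup>2 * s\<^sup>2)) * indicator (Qc (b + 1)) x"
proof (cases "u (qL M x) = 0")
  case False
  let ?p = "qL M x"
  have p1: "?p \<notin> Qc s" using False us by blast
  have p2: "?p \<in> Qc b" using False ub by blast
  have x: "x \<in> Qc (b + 1)" using p2 fl_in(2)[OF M] unfolding Qc_def qL_def by auto
  have "s < max \<bar>fst ?p\<bar> \<bar>snd ?p\<bar>" using p1 unfolding Qc_def by auto
  then have "s\<^sup>2 < (max \<bar>fst ?p\<bar> \<bar>snd ?p\<bar>)\<^sup>2" using s by (intro power_strict_mono) auto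
  then have sn: "s\<^sup>2 < nrm ?p" using nrm_max[of ?p] by linarith
  have d: "pi\<^sup>2 * s\<^sup>2 \<le> c + pi\<^sup>2 * nrm ?p" using sn c by (simp add: add_increasing)
  have pos: "0 < pi\<^sup>2 * s\<^sup>2" using s by simp
  have "\<bar>u ?p / (c + pi\<^sup>2 * nrm ?p)\<bar> = \<bar>u ?p\<bar> / (c + pi\<^sup>2 * nrm ?p)"
    using d pos by simp
  also have "\<dots> \<le> 1 / (pi\<^sup>2 * s\<^sup>2)"
    using d pos u1[of ?p] by (intro frac_le) auto
  finally show ?thesis using x by simp
qed auto

lemma P2_limit:
  fixes u :: "real \<times> real \<Rightarrow> real" and N :: "(real \<times> real) set"
  assumes L: "L \<ge> 1" and s: "s > 0" and u1: "\<And>x. \<bar>u x\<bar> \<le> 1" and us: "\<And>x. x \<in> Qc s \<Longrightarrow> u x = 0"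
    and ub: "\<And>x. x \<notin> Qc b \<Longrightarrow> u x = 0" and N: "N \<in> null_sets lborel" and cont: "\<And>x. x \<notin> N \<Longrightarrow> isCont u x"
  shows "((\<lambda>t. \<integral>x. u (qL (t * L) x) / (1 / t\<^sup>2 + pi\<^sup>2 * nrm (qL (t * L) x)) \<partial>lborel)
     \<longlongrightarrow> (\<integral>x. (if x \<in> N then 0 else u x / (pi\<^sup>2 * nrm x)) \<partial>lborel)) at_top"
proof (rule integral_dominated_convergence_at_top[where w = "\<lambda>x. (1 / (pi\<^sup>2 * s\<^sup>2)) * indicator (Qc (b + 1)) x"])
  let ?U = "\<lambda>t x. u (qL (t * L) x) / (1 / t\<^sup>2 + pi\<^sup>2 * nrm (qL (t * L) x))"
  show m: "?U t \<in> borel_measurable lborel" for t by (rule U_meas)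
  show "integrable lborel (\<lambda>x. (1 / (pi\<^sup>2 * s\<^sup>2)) * indicator (Qc (b + 1)) x)"
    using Qc_integrable by simp
  have lim: "((\<lambda>t. ?U t x) \<longlongrightarrow> (if x \<in> N then 0 else u x / (pi\<^sup>2 * nrm x))) at_top" if "x \<notin> N" for x
    using P2_pointwise[OF L s us cont[OF that]] that by simp
  show "AE x in lborel. ((\<lambda>t. ?U t x) \<longlongrightarrow> (if x \<in> N then 0 else u x / (pi\<^sup>2 * nrm x))) at_top"
  proof (rule AE_I'[OF N])
    show "{x \<in> space lborel. \<not> ((\<lambda>t. ?U t x) \<longlongrightarrow> (if x \<in> N then 0 else u x / (pi\<^sup>2 * nrm x))) at_top} \<subseteq> N"
      using lim by blast
  qed
  have Ns: "N \<in> sets lborel" using N by auto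
  show "(\<lambda>x. if x \<in> N then 0 else u x / (pi\<^sup>2 * nrm x)) \<in> borel_measurable lborel"
  proof (rule borel_measurable_LIMSEQ_real[where u = "\<lambda>n x. if x \<in> N then 0 else ?U (real n) x"])
    fix x :: "real \<times> real"
    show "(\<lambda>n. if x \<in> N then 0 else ?U (real n) x) \<longlonglongrightarrow> (if x \<in> N then 0 else u x / (pi\<^sup>2 * nrm x))"
    proof (cases "x \<in> N")
      case False
      then show ?thesis using filterlim_compose[OF lim[OF False] filterlim_real_sequentially] by simp
    qed simp
  next
    fix n :: nat
    show "(\<lambda>x. if x \<in> N then 0 else ?U (real n) x) \<in> borel_measurable lborel"
      using Ns m by measurable
  qed
  show "\<forall>\<^sub>F t in at_top. AE x in lborel. norm (?U t x) \<le> (1 / (pi\<^sup>2 * s\<^sup>2)) * indicator (Qc (b + 1)) x"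
    using eventually_ge_at_top[of "1::real"]
  proof eventually_elim
    case (elim t)
    have "t * L \<ge> 1" using elim L by (metis mult_1_left mult_mono zero_le_one order_trans)
    then show ?case
      by (intro AE_I2) (simp only: real_norm_def, rule P2_bound[OF _ s u1 us ub], auto)
  qed
qed



lemma lattice_integral_M:
  fixes F :: "int \<times> int \<Rightarrow> real" and M :: real
  assumes M: "M > 0" and S: "finite S" and F0: "\<And>k. k \<notin> S \<Longrightarrow> F k = 0"
  shows "(\<integral>w. F (\<lfloor>M * fst w\<rfloor>, \<lfloor>M * snd w\<rfloor>) \<partial>(lborel::(real\<times>real) measure)) = (1/M)\<^sup>2 * (\<Sum>k\<in>S. F k)"
proof -
  have d: "1 / M > 0" using M by simp
  have e: "x / (1 / M) = M * x" for x :: real by simp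
  show ?thesis using lattice_integral(2)[where F=F and d="1/M" and S=S, OF d S F0] unfolding e by simp
qed

lemma A1:
  fixes L t s :: real and w :: "real \<times> real"
  assumes L: "L > 0" and t: "t > 0"
  defines "k \<equiv> (\<lfloor>L * fst w\<rfloor>, \<lfloor>L * snd w\<rfloor>)"
  shows "indicator (Qc s) ((1 / t) / L * real_of_int (fst k), (1 / t) / L * real_of_int (snd k))
         / (1 + pi\<^sup>2 / L\<^sup>2 * (real_of_int (fst k) ^ 2 + real_of_int (snd k) ^ 2))
       = indicator (Qc (s * t)) (qL L w) * phi (qL L w)"
proof -
  define a where "a = real_of_int (fst k) / L"
  define b where "b = real_of_int (snd k) / L"
  have q: "qL L w = (a, b)" unfolding qL_def a_def b_def k_def by simp
  have p: "((1 / t) / L * real_of_int (fst k), (1 / t) / L * real_of_int (snd k)) = (a / t, b / t)"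
    unfolding a_def b_def by simp
  have iff: "(a / t, b / t) \<in> Qc s \<longleftrightarrow> (a, b) \<in> Qc (s * t)"
    unfolding Qc_def using t by (simp add: abs_div pos_divide_le_eq)
  have den: "1 + pi\<^sup>2 / L\<^sup>2 * (real_of_int (fst k) ^ 2 + real_of_int (snd k) ^ 2) = 1 + pi\<^sup>2 * (a\<^sup>2 + b\<^sup>2)"
    unfolding a_def b_def using L by (simp add: field_simps power2_eq_square)
  show ?thesis unfolding p q den phi_def by (simp add: indicator_def iff)
qed

lemma A2:
  fixes L t :: real and x :: "real \<times> real" and u :: "real \<times> real \<Rightarrow> real"
  assumes L: "L > 0" and t: "t > 0"
  defines "k \<equiv> (\<lfloor>(t * L) * fst x\<rfloor>, \<lfloor>(t * L) * snd x\<rfloor>)"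
  shows "t\<^sup>2 * (u ((1 / t) / L * real_of_int (fst k), (1 / t) / L * real_of_int (snd k))
         / (1 + pi\<^sup>2 / L\<^sup>2 * (real_of_int (fst k) ^ 2 + real_of_int (snd k) ^ 2)))
       = u (qL (t * L) x) / (1 / t\<^sup>2 + pi\<^sup>2 * nrm (qL (t * L) x))"
proof -
  define a where "a = real_of_int (fst k) / (t * L)"
  define b where "b = real_of_int (snd k) / (t * L)"
  have q: "qL (t * L) x = (a, b)" unfolding qL_def a_def b_def k_def by simp
  have p: "((1 / t) / L * real_of_int (fst k), (1 / t) / L * real_of_int (snd k)) = (a, b)"
    unfolding a_def b_def by simp
  have den: "1 + pi\<^sup>2 / L\<^sup>2 * (real_of_int (fst k) ^ 2 + real_of_int (snd k) ^ 2) = t\<^sup>2 * (1 / t\<^sup>2 + pi\<^sup>2 * (a\<^sup>2 + b\<^sup>2))"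
    unfolding a_def b_def using L t by (simp add: field_simps power2_eq_square)
  have pos: "1 / t\<^sup>2 + pi\<^sup>2 * (a\<^sup>2 + b\<^sup>2) > 0" using t by (simp add: add_pos_nonneg)
  show ?thesis unfolding p q den nrm_def using t pos by simp
qed



lemma c_split:
  fixes \<tau> u :: "real \<times> real \<Rightarrow> real" and s b L t :: real
  assumes L: "L \<ge> 1" and t: "t > 0" and s: "s > 0" and b: "b > 0"
    and t1: "\<And>x. x \<in> Qc s \<Longrightarrow> \<tau> x = 1" and t0: "\<And>x. x \<notin> Qc b \<Longrightarrow> \<tau> x = 0"
    and u: "\<And>x. u x = (if x \<in> Qc s then 0 else (\<tau> x)\<^sup>2)"
  shows "c_epsL \<tau> (1 / t) L = (1/4) * (\<integral>w. indicator (Qc (s * t)) (qL L w) * phi (qL L w) \<partial>lborel)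
     + (1/4) * (\<integral>x. u (qL (t * L) x) / (1 / t\<^sup>2 + pi\<^sup>2 * nrm (qL (t * L) x)) \<partial>lborel)"
proof -
  have L0: "L > 0" using L by simp
  define pt where "pt = (\<lambda>k::int\<times>int. ((1 / t) / L * real_of_int (fst k), (1 / t) / L * real_of_int (snd k)))"
  define den where "den = (\<lambda>k::int\<times>int. 1 + pi\<^sup>2 / L\<^sup>2 * (real_of_int (fst k) ^ 2 + real_of_int (snd k) ^ 2))"
  define T where "T = (\<lambda>k. (\<tau> (pt k))\<^sup>2 / den k)"
  define T1 where "T1 = (\<lambda>k. indicator (Qc s) (pt k) / den k)"
  define T2 where "T2 = (\<lambda>k. u (pt k) / den k)"
  define c where "c = max s b"
  define K where "K = \<lceil>c * t * L\<rceil>"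
  define S where "S = {-K..K} \<times> {-K..K}"
  have finS: "finite S" unfolding S_def by simp
  have inS: "k \<in> S" if "pt k \<in> Qc c" for k
  proof -
    have pos: "(1 / t) / L > 0" using t L0 by simp
    have "\<bar>real_of_int (fst k)\<bar> \<le> c * t * L" "\<bar>real_of_int (snd k)\<bar> \<le> c * t * L"
      using that t L0 unfolding pt_def Qc_def by (auto simp: abs_mult field_simps)
    then have "\<bar>fst k\<bar> \<le> K" "\<bar>snd k\<bar> \<le> K" unfolding K_def by linarith+
    then show ?thesis unfolding S_def by (cases k) auto
  qed
  have Qsc: "Qc s \<subseteq> Qc c" "Qc b \<subseteq> Qc c" unfolding Qc_def c_def by auto
  have T1_0: "T1 k = 0" if "k \<notin> S" for k
    using inS[of k] that Qsc unfolding T1_def by (auto simp: indicator_def)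
  have T2_0: "T2 k = 0" if "k \<notin> S" for k
  proof -
    have "pt k \<notin> Qc b" using inS[of k] that Qsc by auto
    then show ?thesis unfolding T2_def using u t0 by simp
  qed
  have TT: "T k = T1 k + T2 k" for k
    unfolding T_def T1_def T2_def using u t1 by (simp add: indicator_def add_divide_distrib)
  have T_0: "T k = 0" if "k \<notin> S" for k using TT T1_0 T2_0 that by simp
  have c_eq: "c_epsL \<tau> (1 / t) L = 1 / (4 * L\<^sup>2) * infsum T UNIV"
    unfolding c_epsL_def T_def pt_def den_def by simp
  have "infsum T UNIV = infsum T S"
    by (rule infsum_cong_neutral) (use T_0 in auto)
  also have "\<dots> = sum T1 S + sum T2 S" using finS by (simp add: TT sum.distrib)
  finally have inf: "infsum T UNIV = sum T1 S + sum T2 S" .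
  have I1: "(\<integral>w. T1 (\<lfloor>L * fst w\<rfloor>, \<lfloor>L * snd w\<rfloor>) \<partial>lborel) = (1/L)\<^sup>2 * sum T1 S"
    by (rule lattice_integral_M[OF L0 finS T1_0])
  have I1': "(\<lambda>w. T1 (\<lfloor>L * fst w\<rfloor>, \<lfloor>L * snd w\<rfloor>)) = (\<lambda>w. indicator (Qc (s * t)) (qL L w) * phi (qL L w))"
    unfolding T1_def pt_def den_def using A1[OF L0 t] by simp
  have tL: "t * L > 0" using t L0 by simp
  have I2: "(\<integral>x. T2 (\<lfloor>(t * L) * fst x\<rfloor>, \<lfloor>(t * L) * snd x\<rfloor>) \<partial>lborel) = (1/(t * L))\<^sup>2 * sum T2 S"
    by (rule lattice_integral_M[OF tL finS T2_0])
  have I2': "(\<lambda>x. t\<^sup>2 * T2 (\<lfloor>(t * L) * fst x\<rfloor>, \<lfloor>(t * L) * snd x\<rfloor>)) = (\<lambda>x. u (qL (t * L) x) / (1 / t\<^sup>2 + pi\<^sup>2 * nrm (qL (t * L) x)))"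
    unfolding T2_def pt_def den_def using A2[OF L0 t] by simp
  have "(\<integral>x. u (qL (t * L) x) / (1 / t\<^sup>2 + pi\<^sup>2 * nrm (qL (t * L) x)) \<partial>lborel) = t\<^sup>2 * ((1/(t * L))\<^sup>2 * sum T2 S)"
    unfolding I2'[symmetric] I2[symmetric] by (rule integral_mult_right_zero)
  also have "\<dots> = (1/L)\<^sup>2 * sum T2 S" using t by (simp add: field_simps power2_eq_square)
  finally have J2: "(\<integral>x. u (qL (t * L) x) / (1 / t\<^sup>2 + pi\<^sup>2 * nrm (qL (t * L) x)) \<partial>lborel) = (1/L)\<^sup>2 * sum T2 S" .
  have J1: "(\<integral>w. indicator (Qc (s * t)) (qL L w) * phi (qL L w) \<partial>lborel) = (1/L)\<^sup>2 * sum T1 S"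
    using I1 unfolding I1' .
  show ?thesis unfolding c_eq inf J1 J2 using L0 by (simp add: field_simps power2_eq_square)
qed



lemma fin_null: "{s, -s::real} \<in> null_sets lborel"
proof -
  have "countable {s, -s::real}" by simp
  then have "emeasure lborel {s, -s::real} = 0" by (rule emeasure_lborel_countable)
  moreover have "{s, -s::real} \<in> sets lborel" by simp
  ultimately show ?thesis by (simp add: null_sets_def)
qed

lemma line_null: "{x::real\<times>real. \<bar>fst x\<bar> = s} \<in> null_sets lborel"
proof -
  have sub: "{x::real\<times>real. \<bar>fst x\<bar> = s} \<subseteq> {s, -s} \<times> UNIV" by (auto simp: abs_if split: if_splits)
  have "{s, -s::real} \<times> (UNIV::real set) \<in> null_sets (lborel \<Otimes>\<^sub>M lborel)"
    by (rule lborel.times_in_null_sets1[OF fin_null]) simp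
  then have n: "{s, -s::real} \<times> (UNIV::real set) \<in> null_sets lborel" by (simp only: lborel_prod)
  have m: "{x::real\<times>real. \<bar>fst x\<bar> = s} \<in> sets lborel" by measurable
  show ?thesis by (rule null_sets_subset[OF n m sub])
qed

lemma line_null2: "{x::real\<times>real. \<bar>snd x\<bar> = s} \<in> null_sets lborel"
proof -
  have sub: "{x::real\<times>real. \<bar>snd x\<bar> = s} \<subseteq> UNIV \<times> {s, -s}" by (auto simp: abs_if split: if_splits)
  have "(UNIV::real set) \<times> {s, -s::real} \<in> null_sets (lborel \<Otimes>\<^sub>M lborel)"
    by (rule lborel.times_in_null_sets2[OF _ fin_null]) simp
  then have n: "(UNIV::real set) \<times> {s, -s::real} \<in> null_sets lborel" by (simp only: lborel_prod)
  have m: "{x::real\<times>real. \<bar>snd x\<bar> = s} \<in> sets lborel" by measurable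
  show ?thesis by (rule null_sets_subset[OF n m sub])
qed



lemma u_cont:
  fixes \<tau> :: "real \<times> real \<Rightarrow> real"
  assumes c: "isCont \<tau> x" and x1: "\<bar>fst x\<bar> \<noteq> s" and x2: "\<bar>snd x\<bar> \<noteq> s"
  shows "isCont (\<lambda>x. if x \<in> Qc s then 0 else (\<tau> x)\<^sup>2) x"
proof (cases "x \<in> Qc s")
  case True
  have o: "open {y::real\<times>real. \<bar>fst y\<bar> < s \<and> \<bar>snd y\<bar> < s}"
    by (intro open_Collect_conj open_Collect_less continuous_intros)
  have "x \<in> {y::real\<times>real. \<bar>fst y\<bar> < s \<and> \<bar>snd y\<bar> < s}" using True x1 x2 unfolding Qc_def by auto
  then have "eventually (\<lambda>y. y \<in> {y::real\<times>real. \<bar>fst y\<bar> < s \<and> \<bar>snd y\<bar> < s}) (nhds x)"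
    by (rule eventually_nhds_in_open[OF o])
  then have ev: "eventually (\<lambda>y. (if y \<in> Qc s then 0 else (\<tau> y)\<^sup>2) = 0) (nhds x)"
    by eventually_elim (auto simp: Qc_def)
  show ?thesis using isCont_cong[OF ev] by simp
next
  case False
  have o: "open {y::real\<times>real. s < \<bar>fst y\<bar> \<or> s < \<bar>snd y\<bar>}"
    by (intro open_Collect_disj open_Collect_less continuous_intros)
  have "x \<in> {y::real\<times>real. s < \<bar>fst y\<bar> \<or> s < \<bar>snd y\<bar>}" using False unfolding Qc_def by auto
  then have "eventually (\<lambda>y. y \<in> {y::real\<times>real. s < \<bar>fst y\<bar> \<or> s < \<bar>snd y\<bar>}) (nhds x)"
    by (rule eventually_nhds_in_open[OF o])
  then have ev: "eventually (\<lambda>y. (if y \<in> Qc s then 0 else (\<tau> y)\<^sup>2) = (\<tau> y)\<^sup>2) (nhds x)"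
    by eventually_elim (auto simp: Qc_def)
  have "isCont (\<lambda>y. (\<tau> y)\<^sup>2) x" using c by (intro continuous_intros)
  then show ?thesis using isCont_cong[OF ev] by simp
qed



theorem lemma6p16:
  shows "\<exists>C :: real \<Rightarrow> real. (C \<longlongrightarrow> 0) at_top \<and>
    (\<forall>\<tau> :: real \<times> real \<Rightarrow> real.
       ((\<forall>x. 0 \<le> \<tau> x \<and> \<tau> x \<le> 1) \<and>
        (AE x in lborel. isCont \<tau> x) \<and>
        (\<exists>a b. 0 < a \<and> a < b \<and>
           (\<forall>x \<in> ball 0 a. \<tau> x = 1) \<and> (\<forall>x. x \<notin> ball 0 b \<longrightarrow> \<tau> x = 0)))
       \<longrightarrow> (\<exists>c\<tau> :: real. \<forall>L \<ge> 1.
              ((\<lambda>\<epsilon>. c_epsL \<tau> \<epsilon> L - 1 / (2 * pi) * ln (1 / \<epsilon>) - c\<tau>) \<longlongrightarrow> C L)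
                (at_right 0)))"
proof (intro exI[of _ CC] conjI allI impI)
  show "(CC \<longlongrightarrow> 0) at_top" by (rule CC_tendsto)
  fix \<tau> :: "real \<times> real \<Rightarrow> real"
  assume H: "(\<forall>x. 0 \<le> \<tau> x \<and> \<tau> x \<le> 1) \<and> (AE x in lborel. isCont \<tau> x) \<and>
        (\<exists>a b. 0 < a \<and> a < b \<and> (\<forall>x \<in> ball 0 a. \<tau> x = 1) \<and> (\<forall>x. x \<notin> ball 0 b \<longrightarrow> \<tau> x = 0))"
  then have bnd: "\<And>x. 0 \<le> \<tau> x \<and> \<tau> x \<le> 1" and ae: "AE x in lborel. isCont \<tau> x" by auto
  from H obtain a b where ab: "0 < a" "a < b" and ta: "\<forall>x \<in> ball 0 a. \<tau> x = 1"
    and tb: "\<forall>x. x \<notin> ball 0 b \<longrightarrow> \<tau> x = 0" by blast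
  define s where "s = a / 3"
  have s0: "s > 0" and b0: "b > 0" using ab unfolding s_def by auto
  have t1: "\<tau> x = 1" if "x \<in> Qc s" for x
  proof -
    have "norm x = sqrt ((fst x)\<^sup>2 + (snd x)\<^sup>2)" by (cases x) (simp add: norm_Pair)
    also have "\<dots> \<le> \<bar>fst x\<bar> + \<bar>snd x\<bar>" by (rule sqrt_sum_squares_le_sum_abs)
    also have "\<dots> \<le> 2 * s" using that unfolding Qc_def by auto
    also have "\<dots> < a" using ab unfolding s_def by simp
    finally show ?thesis using ta by auto
  qed
  have t0: "\<tau> x = 0" if "x \<notin> Qc b" for x
  proof -
    have "b < \<bar>fst x\<bar> \<or> b < \<bar>snd x\<bar>" using that unfolding Qc_def by auto
    moreover have "\<bar>fst x\<bar> \<le> norm x" "\<bar>snd x\<bar> \<le> norm x"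
      using norm_fst_le[of "fst x" "snd x"] norm_snd_le[of "snd x" "fst x"] by auto
    ultimately have "b < norm x" by linarith
    then have "x \<notin> ball 0 b" by (simp add: dist_norm)
    then show ?thesis using tb by blast
  qed
  define u where "u = (\<lambda>x. if x \<in> Qc s then 0 else (\<tau> x)\<^sup>2)"
  have u_eq: "u x = (if x \<in> Qc s then 0 else (\<tau> x)\<^sup>2)" for x unfolding u_def by simp
  have u1: "\<bar>u x\<bar> \<le> 1" for x
    using bnd[of x] unfolding u_def by (auto simp: power_le_one abs_le_iff)
  have us: "u x = 0" if "x \<in> Qc s" for x using that unfolding u_def by simp
  have ub: "u x = 0" if "x \<notin> Qc b" for x using that t0[OF that] unfolding u_def by simp
  from ae obtain N0 where N0: "{x \<in> space lborel. \<not> isCont \<tau> x} \<subseteq> N0" "emeasure lborel N0 = 0" "N0 \<in> sets lborel"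
    by (rule AE_E)
  define N where "N = N0 \<union> {x::real\<times>real. \<bar>fst x\<bar> = s} \<union> {x::real\<times>real. \<bar>snd x\<bar> = s}"
  have N0n: "N0 \<in> null_sets lborel" using N0 by (simp add: null_sets_def)
  have Nn: "N \<in> null_sets lborel" unfolding N_def
    by (intro null_sets.Un N0n line_null line_null2)
  have cont: "isCont u x" if "x \<notin> N" for x
  proof -
    have "isCont \<tau> x" using that N0(1) unfolding N_def by auto
    moreover have "\<bar>fst x\<bar> \<noteq> s" "\<bar>snd x\<bar> \<noteq> s" using that unfolding N_def by auto
    ultimately show ?thesis unfolding u_def by (rule u_cont)
  qed
  define f2 where "f2 = (\<lambda>x. if x \<in> N then 0 else u x / (pi\<^sup>2 * nrm x))"
  show "\<exists>c\<tau>. \<forall>L \<ge> 1. ((\<lambda>\<epsilon>. c_epsL \<tau> \<epsilon> L - 1 / (2 * pi) * ln (1 / \<epsilon>) - c\<tau>) \<longlongrightarrow> CC L) (at_right 0)"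
  proof (intro exI[of _ "g0 / 4 + ln s / (2 * pi) + (1/4) * (\<integral>x. f2 x \<partial>lborel)"] allI impI)
    fix L :: real assume L: "L \<ge> 1"
    let ?c = "g0 / 4 + ln s / (2 * pi) + (1/4) * (\<integral>x. f2 x \<partial>lborel)"
    let ?F = "\<lambda>\<epsilon>. c_epsL \<tau> \<epsilon> L - 1 / (2 * pi) * ln (1 / \<epsilon>) - ?c"
    have P1: "((\<lambda>t. (1/4) * (\<integral>w. indicator (Qc (s * t)) (qL L w) * phi (qL L w) \<partial>lborel) - ln t / (2 * pi))
       \<longlongrightarrow> g0 / 4 + ln s / (2 * pi) + CC L) at_top"
      by (rule P1_limit[OF L s0])
    have P2: "((\<lambda>t. \<integral>x. u (qL (t * L) x) / (1 / t\<^sup>2 + pi\<^sup>2 * nrm (qL (t * L) x)) \<partial>lborel)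
       \<longlongrightarrow> (\<integral>x. f2 x \<partial>lborel)) at_top"
      unfolding f2_def by (rule P2_limit[OF L s0 u1 us ub Nn cont])
    have lim: "((\<lambda>t. ((1/4) * (\<integral>w. indicator (Qc (s * t)) (qL L w) * phi (qL L w) \<partial>lborel) - ln t / (2 * pi))
        + (1/4) * (\<integral>x. u (qL (t * L) x) / (1 / t\<^sup>2 + pi\<^sup>2 * nrm (qL (t * L) x)) \<partial>lborel) - ?c)
       \<longlongrightarrow> (g0 / 4 + ln s / (2 * pi) + CC L) + (1/4) * (\<integral>x. f2 x \<partial>lborel) - ?c) at_top"
      by (intro tendsto_intros P1 P2)
    have ev: "\<forall>\<^sub>F t in at_top. ((1/4) * (\<integral>w. indicator (Qc (s * t)) (qL L w) * phi (qL L w) \<partial>lborel) - ln t / (2 * pi))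
        + (1/4) * (\<integral>x. u (qL (t * L) x) / (1 / t\<^sup>2 + pi\<^sup>2 * nrm (qL (t * L) x)) \<partial>lborel) - ?c = ?F (inverse t)"
      using eventually_gt_at_top[of "0::real"]
    proof eventually_elim
      case (elim t)
      have "c_epsL \<tau> (1 / t) L = (1/4) * (\<integral>w. indicator (Qc (s * t)) (qL L w) * phi (qL L w) \<partial>lborel)
         + (1/4) * (\<integral>x. u (qL (t * L) x) / (1 / t\<^sup>2 + pi\<^sup>2 * nrm (qL (t * L) x)) \<partial>lborel)"
        by (rule c_split[OF L elim s0 b0 t1 t0 u_eq])
      then show ?case using elim by (simp add: inverse_eq_divide)
    qed
    have G: "((\<lambda>t. ?F (inverse t)) \<longlongrightarrow> CC L) at_top"
      using Lim_transform_eventually[OF lim ev] by simp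
    have "((\<lambda>x. ?F (inverse (inverse x))) \<longlongrightarrow> CC L) (at_right 0)"
      by (rule filterlim_compose[OF G filterlim_inverse_at_top_right])
    then show "(?F \<longlongrightarrow> CC L) (at_right 0)" by simp
  qed
qed


end
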